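(* Let $p$ be a binary word of length $l$, and for $i\ge1$ let $r_i$ be the number of runs of $p$ of size $i$. Then for every $k\ge 2$, $$B_{l+1,p}(k)=r_{k-1}.$$
   Context: $c_p(w)$ is the number of occurrences of $p$ as a (not necessarily consecutive) subsequence of the binary word $w$; $B_{n,p}(k)$ is the number of binary words of length $n$ with $c_p(w)=k$. A run is a maximal block of consecutive equal letters; its size is its length. *)

theory Defs
  imports Main
begin

definition occ :: "bool list \<Rightarrow> bool list \<Rightarrow> nat" where
  "occ p w = card {I. I \<subseteq> {..<length w} \<and> card I = length p \<and> nths w I = p}"

definition B :: "nat \<Rightarrow> bool list \<Rightarrow> nat \<Rightarrow> nat" where
  "B n p k = card {w :: bool list. length w = n \<and> occ p w = k}"

definition runs_of_size :: "bool list \<Rightarrow> nat \<Rightarrow> nat" where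
  "runs_of_size p i = card {(a, b). a < b \<and> b \<le> length p \<and> b - a = i
      \<and> (\<forall>j\<in>{a..<b}. p ! j = p ! a)
      \<and> (a = 0 \<or> p ! (a - 1) \<noteq> p ! a)
      \<and> (b = length p \<or> p ! b \<noteq> p ! a)}"

end

theory Submission
  imports Defs
begin

definition del :: "nat \<Rightarrow> bool list \<Rightarrow> bool list" where
  "del j w = take j w @ drop (Suc j) w"

definition ins :: "nat \<Rightarrow> bool \<Rightarrow> bool list \<Rightarrow> bool list" where
  "ins a c p = take a p @ c # drop a p"

lemma nths_del: assumes "j < length w"
  shows "nths w ({..<length w} - {j}) = del j w"
proof -
  have w: "w = take j w @ (w!j # drop (Suc j) w)"
    using assms by (simp add: Cons_nth_drop_Suc)
  have "nths w ({..<length w} - {j}) =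
     nths (take j w) ({..<length w} - {j}) @ nths (w!j # drop (Suc j) w) {i. i + length (take j w) \<in> ({..<length w} - {j})}"
    by (subst w, rule nths_append)
  also have "nths (take j w) ({..<length w} - {j}) = take j w"
    using assms by (intro nths_all) auto
  also have "nths (w!j # drop (Suc j) w) {i. i + length (take j w) \<in> ({..<length w} - {j})} = drop (Suc j) w"
    using assms by (simp add: nths_Cons, intro nths_all) auto
  finally show ?thesis by (simp add: del_def)
qed

lemma card_minus_one:
  assumes "I \<subseteq> {..<n}" "card I = n - 1" "n > 0"
  shows "\<exists>j<n. I = {..<n} - {j}"
proof -
  have "card ({..<n} - I) = 1"
    using assms by (simp add: card_Diff_subset finite_subset)
  then obtain j where j: "{..<n} - I = {j}" by (auto simp: card_Suc_eq)
  hence "j < n" by auto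
  moreover have "I = {..<n} - {j}" using j assms(1) by auto
  ultimately show ?thesis by blast
qed

lemma occ_del:
  assumes len: "length w = Suc (length p)"
  shows "occ p w = card {j. j < length w \<and> del j w = p}"
proof -
  let ?n = "length w"
  have "{I. I \<subseteq> {..<?n} \<and> card I = length p \<and> nths w I = p}
      = (\<lambda>j. {..<?n} - {j}) ` {j. j < ?n \<and> del j w = p}"
  proof (intro set_eqI iffI)
    fix I assume "I \<in> {I. I \<subseteq> {..<?n} \<and> card I = length p \<and> nths w I = p}"
    hence I: "I \<subseteq> {..<?n}" "card I = ?n - 1" "nths w I = p" using len by auto
    then obtain j where "j < ?n" "I = {..<?n} - {j}" using card_minus_one[OF I(1,2)] len by auto
    thus "I \<in> (\<lambda>j. {..<?n} - {j}) ` {j. j < ?n \<and> del j w = p}"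
      using I(3) nths_del by auto
  next
    fix I assume "I \<in> (\<lambda>j. {..<?n} - {j}) ` {j. j < ?n \<and> del j w = p}"
    then obtain j where j: "j < ?n" "del j w = p" "I = {..<?n} - {j}" by auto
    thus "I \<in> {I. I \<subseteq> {..<?n} \<and> card I = length p \<and> nths w I = p}"
      using nths_del[OF j(1)] len by auto
  qed
  moreover have "inj_on (\<lambda>j. {..<?n} - {j}) {j. j < ?n \<and> del j w = p}"
    by (auto simp: inj_on_def)
  ultimately show ?thesis unfolding occ_def by (simp add: card_image)
qed

lemma del_eq_iff:
  assumes "j < length w" "length w = Suc (length p)"
  shows "del j w = p \<longleftrightarrow> (\<forall>i<length p. p!i = (if i < j then w!i else w!(Suc i)))"
  using assms unfolding del_def
  by (auto simp: list_eq_iff_nth_eq nth_append min_def)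

lemma ins_nth:
  assumes "a \<le> length p" "i < Suc (length p)"
  shows "ins a c p ! i = (if i < a then p!i else if i = a then c else p!(i-1))"
  using assms unfolding ins_def
  by (auto simp: nth_append min_def nth_Cons' )

lemma length_ins: "a \<le> length p \<Longrightarrow> length (ins a c p) = Suc (length p)"
  by (simp add: ins_def)

lemma J_ins:
  assumes ab: "a < b" "b \<le> length p" and const: "\<forall>j\<in>{a..<b}. p!j = p!a"
    and st: "a = 0 \<or> p!(a-1) \<noteq> p!a" and en: "b = length p \<or> p!b \<noteq> p!a"
  shows "{j. j < length (ins a (p!a) p) \<and> del j (ins a (p!a) p) = p} = {a..b}"
proof -
  let ?w = "ins a (p!a) p"
  have len: "length ?w = Suc (length p)" using ab by (simp add: length_ins)
  have wn: "\<And>i. i < Suc (length p) \<Longrightarrow> ?w ! i = (if i < a then p!i else if i = a then p!a else p!(i-1))"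
    using ab by (intro ins_nth) auto
  show ?thesis
  proof (intro set_eqI iffI)
    fix j assume "j \<in> {j. j < length ?w \<and> del j ?w = p}"
    hence j: "j < Suc (length p)" and d: "\<forall>i<length p. p!i = (if i < j then ?w!i else ?w!(Suc i))"
      using del_eq_iff[of j ?w p] len by auto
    have "a \<le> j"
    proof (rule ccontr)
      assume "\<not> a \<le> j"
      hence "a > 0" "j \<le> a - 1" by auto
      hence "a - 1 < length p" "\<not> (a - 1 < j \<and> False)" "Suc (a-1) = a" using ab by auto
      hence "p!(a-1) = (if a - 1 < j then ?w!(a-1) else ?w!(Suc (a-1)))" using d by blast
      hence "p!(a-1) = ?w!a" using \<open>j \<le> a - 1\<close> \<open>Suc (a-1) = a\<close> by simp
      also have "\<dots> = p!a" using wn ab by simp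
      finally show False using st \<open>a > 0\<close> by simp
    qed
    moreover have "j \<le> b"
    proof (rule ccontr)
      assume "\<not> j \<le> b"
      hence "b < length p" "b < j" using j by auto
      hence "p!b = ?w!b" using d by simp
      also have "\<dots> = p!(b-1)" using wn ab \<open>b < length p\<close> by simp
      also have "\<dots> = p!a"
      proof -
        have "b - 1 \<in> {a..<b}" using ab by auto
        thus ?thesis using const by blast
      qed
      finally have "p!b = p!a" .
      thus False using en \<open>b < length p\<close> by simp
    qed
    ultimately show "j \<in> {a..b}" by simp
  next
    fix j assume "j \<in> {a..b}"
    hence j: "a \<le> j" "j \<le> b" by auto
    have "\<forall>i<length p. p!i = (if i < j then ?w!i else ?w!(Suc i))"
    proof (intro allI impI)
      fix i assume i: "i < length p"
      show "p!i = (if i < j then ?w!i else ?w!(Suc i))"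
      proof (cases "i < j")
        case True
        show ?thesis
        proof (cases "i \<le> a")
          case True thus ?thesis using wn i \<open>i < j\<close> by auto
        next
          case False
          hence "?w!i = p!(i-1)" using wn i by simp
          also have "\<dots> = p!a" using const[rule_format, of "i-1"] False \<open>i < j\<close> j by (simp add: less_diff_conv2)
          also have "\<dots> = p!i" using const[rule_format, of i] False \<open>i < j\<close> j by simp
          finally show ?thesis using True by simp
        qed
      next
        case False thus ?thesis using wn i j by simp
      qed
    qed
    thus "j \<in> {j. j < length ?w \<and> del j ?w = p}"
      using del_eq_iff[of j ?w p] len j ab by auto
  qed
qed

lemma const_chain:
  assumes "\<forall>i. a \<le> i \<and> i < b \<longrightarrow> f (Suc i) = f i" "a \<le> j" "j \<le> b"
  shows "f j = (f a :: bool)"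
  using assms(2,3)
proof (induction j)
  case 0 thus ?case by simp
next
  case (Suc j)
  show ?case
  proof (cases "a = Suc j")
    case True thus ?thesis by simp
  next
    case False
    hence "a \<le> j" "j < b" using Suc.prems by auto
    thus ?thesis using Suc.IH assms(1) by auto
  qed
qed

lemma J_run:
  assumes len: "length w = Suc (length p)"
    and card: "card {j. j < length w \<and> del j w = p} = k" and k: "k \<ge> 2"
  shows "\<exists>a b. a < b \<and> b \<le> length p \<and> b - a = k - 1 \<and> (\<forall>j\<in>{a..<b}. p!j = p!a)
     \<and> (a = 0 \<or> p!(a-1) \<noteq> p!a) \<and> (b = length p \<or> p!b \<noteq> p!a) \<and> w = ins a (p!a) p"
proof -
  define J where "J = {j. j < length w \<and> del j w = p}"
  have fin: "finite J" unfolding J_def by simp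
  have cJ: "card J = k" using card J_def by simp
  have ne: "J \<noteq> {}" using cJ k by auto
  define a where "a = Min J"
  define b where "b = Max J"
  have aJ: "a \<in> J" using fin ne a_def by simp
  have bJ: "b \<in> J" using fin ne b_def by simp
  have aMin: "\<And>j. j \<in> J \<Longrightarrow> a \<le> j" using fin a_def by simp
  have bMax: "\<And>j. j \<in> J \<Longrightarrow> j \<le> b" using fin b_def by simp
  have inJ: "\<And>j. j \<in> J \<longleftrightarrow> j < length w \<and> (\<forall>i<length p. p!i = (if i < j then w!i else w!(Suc i)))"
    unfolding J_def using del_eq_iff len by blast
  have da: "\<forall>i<length p. p!i = (if i < a then w!i else w!(Suc i))" and an: "a < length w"
    using aJ inJ by auto
  have db: "\<forall>i<length p. p!i = (if i < b then w!i else w!(Suc i))" and bn: "b < length w"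
    using bJ inJ by auto
  have ab: "a < b"
  proof (rule ccontr)
    assume "\<not> a < b"
    hence "J \<subseteq> {a}" using aMin bMax by force
    hence "card J \<le> card {a}" by (intro card_mono) auto
    hence "card J \<le> 1" by simp
    thus False using cJ k by simp
  qed
  have bl: "b \<le> length p" using bn len by simp
  have cw: "\<forall>i. a \<le> i \<and> i < b \<longrightarrow> w!(Suc i) = w!i"
  proof (intro allI impI)
    fix i assume "a \<le> i \<and> i < b"
    thus "w!(Suc i) = w!i" using da[rule_format, of i] db[rule_format, of i] bl by auto
  qed
  have cwa: "\<And>j. a \<le> j \<Longrightarrow> j \<le> b \<Longrightarrow> w!j = w!a"
    using const_chain[OF cw] by blast
  have "{a..b} \<subseteq> J"
  proof
    fix j assume j: "j \<in> {a..b}"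
    have "\<forall>i<length p. p!i = (if i < j then w!i else w!(Suc i))"
    proof (intro allI impI)
      fix i assume i: "i < length p"
      show "p!i = (if i < j then w!i else w!(Suc i))"
      proof (cases "i < a")
        case True thus ?thesis using da i j by auto
      next
        case False
        hence "p!i = w!(Suc i)" using da i by auto
        moreover have "i < j \<Longrightarrow> w!(Suc i) = w!i" using cw False j by auto
        ultimately show ?thesis by simp
      qed
    qed
    thus "j \<in> J" using inJ j bn by auto
  qed
  hence Jeq: "J = {a..b}" using aMin bMax by auto
  hence bak: "b - a = k - 1" using cJ by simp
  have pa: "p!a = w!a" using da ab bl cw by auto
  have const: "\<forall>j\<in>{a..<b}. p!j = p!a"
  proof
    fix j assume j: "j \<in> {a..<b}"
    hence "p!j = w!(Suc j)" using da bl by auto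
    also have "\<dots> = w!a" using cwa[of "Suc j"] j by auto
    finally show "p!j = p!a" using pa by simp
  qed
  have st: "a = 0 \<or> p!(a-1) \<noteq> p!a"
  proof (rule ccontr)
    assume "\<not> (a = 0 \<or> p!(a-1) \<noteq> p!a)"
    hence a0: "a > 0" and eq: "p!(a-1) = p!a" by auto
    have "\<forall>i<length p. p!i = (if i < a - 1 then w!i else w!(Suc i))"
    proof (intro allI impI)
      fix i assume i: "i < length p"
      show "p!i = (if i < a - 1 then w!i else w!(Suc i))"
      proof (cases "i = a - 1")
        case True
        hence "p!i = w!i" using da i a0 by auto
        also have "\<dots> = w!(Suc i)" using True eq pa da i a0 by auto
        finally show ?thesis using True by simp
      next
        case False thus ?thesis using da i by auto
      qed
    qed
    hence "a - 1 \<in> J" using inJ an by auto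
    thus False using aMin a0 by fastforce
  qed
  have en: "b = length p \<or> p!b \<noteq> p!a"
  proof (rule ccontr)
    assume "\<not> (b = length p \<or> p!b \<noteq> p!a)"
    hence bl': "b < length p" and eq: "p!b = p!a" using bl by auto
    have pb: "p!b = w!(Suc b)" using db bl' by auto
    have "\<forall>i<length p. p!i = (if i < Suc b then w!i else w!(Suc i))"
    proof (intro allI impI)
      fix i assume i: "i < length p"
      show "p!i = (if i < Suc b then w!i else w!(Suc i))"
      proof (cases "i < a")
        case True thus ?thesis using da i ab by auto
      next
        case False
        show ?thesis
        proof (cases "i < b")
          case True thus ?thesis using da i False cw by auto
        next
          case False2: False
          show ?thesis
          proof (cases "i = b")
            case True thus ?thesis using pb eq pa cwa[of b] ab by auto
          next
            case False thus ?thesis using da i False2 ab by auto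
          qed
        qed
      qed
    qed
    hence "Suc b \<in> J" using inJ bl' len by auto
    thus False using bMax by fastforce
  qed
  have "w = ins a (p!a) p"
  proof (rule nth_equalityI)
    show "length w = length (ins a (p!a) p)" using len length_ins[of a p] ab bl by simp
  next
    fix i assume "i < length w"
    hence i: "i < Suc (length p)" using len by simp
    have "ins a (p!a) p ! i = (if i < a then p!i else if i = a then p!a else p!(i-1))"
      using ins_nth[of a p i] ab bl i by simp
    also have "\<dots> = w!i"
    proof -
      { assume "i < a" hence ?thesis using da ab bl by auto }
      moreover { assume "i = a" hence ?thesis using pa by simp }
      moreover { assume ia: "i > a"
        hence "p!(i-1) = w!(Suc (i-1))" using da i by auto
        hence ?thesis using ia by simp }
      ultimately show ?thesis by linarith
    qed
    finally show "w!i = ins a (p!a) p ! i" by simp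
  qed
  thus ?thesis using ab bl bak const st en by blast
qed

theorem mainTheorem4:
  fixes p :: "bool list" and k :: nat
  assumes "k \<ge> 2"
  shows "B (length p + 1) p k = runs_of_size p (k - 1)"
proof -
  define R where "R = {(a, b). a < b \<and> b \<le> length p \<and> b - a = k - 1
      \<and> (\<forall>j\<in>{a..<b}. p ! j = p ! a)
      \<and> (a = 0 \<or> p ! (a - 1) \<noteq> p ! a)
      \<and> (b = length p \<or> p ! b \<noteq> p ! a)}"
  define f where "f = (\<lambda>(a::nat, b::nat). ins a (p!a) p)"
  have eq: "{w :: bool list. length w = length p + 1 \<and> occ p w = k} = f ` R"
  proof (intro set_eqI iffI)
    fix w assume "w \<in> {w :: bool list. length w = length p + 1 \<and> occ p w = k}"
    hence len: "length w = Suc (length p)" and o: "occ p w = k" by auto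
    have "card {j. j < length w \<and> del j w = p} = k" using occ_del[OF len] o by simp
    from J_run[OF len this assms] obtain a b where
      "a < b \<and> b \<le> length p \<and> b - a = k - 1 \<and> (\<forall>j\<in>{a..<b}. p!j = p!a)
     \<and> (a = 0 \<or> p!(a-1) \<noteq> p!a) \<and> (b = length p \<or> p!b \<noteq> p!a) \<and> w = ins a (p!a) p"
      by blast
    hence "(a,b) \<in> R" "w = f (a,b)" unfolding R_def f_def mem_Collect_eq case_prod_conv by blast+
    thus "w \<in> f ` R" by blast
  next
    fix w assume "w \<in> f ` R"
    then obtain a b where ab: "(a,b) \<in> R" and w: "w = ins a (p!a) p" unfolding f_def by auto
    from ab have r: "a < b" "b \<le> length p" "b - a = k - 1" "\<forall>j\<in>{a..<b}. p!j = p!a"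
      "a = 0 \<or> p!(a-1) \<noteq> p!a" "b = length p \<or> p!b \<noteq> p!a" unfolding R_def mem_Collect_eq case_prod_conv by blast+
    have len: "length w = Suc (length p)" using w r(1,2) length_ins[of a p] by simp
    have "occ p w = card {a..b}" using occ_del[OF len] J_ins[OF r(1,2,4,5,6)] w by simp
    also have "\<dots> = k" using r(1,3) assms by simp
    finally show "w \<in> {w :: bool list. length w = length p + 1 \<and> occ p w = k}" using len by simp
  qed
  have inj: "inj_on f R"
  proof (rule inj_onI)
    fix x y assume x: "x \<in> R" and y: "y \<in> R" and fxy: "f x = f y"
    obtain a b where xab: "x = (a,b)" by (cases x)
    obtain c d where ycd: "y = (c,d)" by (cases y)
    from x have r: "a < b" "b \<le> length p" "\<forall>j\<in>{a..<b}. p!j = p!a"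
      "a = 0 \<or> p!(a-1) \<noteq> p!a" "b = length p \<or> p!b \<noteq> p!a" unfolding R_def xab mem_Collect_eq case_prod_conv by blast+
    from y have s: "c < d" "d \<le> length p" "\<forall>j\<in>{c..<d}. p!j = p!c"
      "c = 0 \<or> p!(c-1) \<noteq> p!c" "d = length p \<or> p!d \<noteq> p!c" unfolding R_def ycd mem_Collect_eq case_prod_conv by blast+
    have "ins a (p!a) p = ins c (p!c) p" using fxy xab ycd f_def by simp
    hence "{a..b} = {c..d}" using J_ins[OF r] J_ins[OF s] by (metis (no_types))
    hence "a = c" "b = d" using r(1) s(1) by (simp_all add: Icc_eq_Icc)
    thus "x = y" using xab ycd by simp
  qed
  have "B (length p + 1) p k = card (f ` R)" unfolding B_def using eq by simp
  also have "\<dots> = card R" using card_image[OF inj] .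
  also have "\<dots> = runs_of_size p (k - 1)" unfolding runs_of_size_def R_def by simp
  finally show ?thesis .
qed

end
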